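(* Let $k$ be an odd positive integer and $\mu, n$ positive integers such that $k^4\mu^4 n^4 - 16k(4\mu^2+n^2) = s^2$ for some integer $s$. Then \[ (5k\mu^2 - 4)(5kn^2 - 16) \leq 189. \] *)

theory Defs
  imports Main
begin

end

theory Submission
  imports Defs
begin

lemma sq_bound:
  fixes x c m :: int
  assumes "0 \<le> x" "x^2 \<le> c" "c < (m+1)^2" "0 \<le> m"
  shows "x \<le> m"
proof (rule ccontr)
  assume "\<not> x \<le> m"
  hence "m + 1 \<le> x" by simp
  hence "(m+1)^2 \<le> x^2" using assms(4) by (intro power_mono) auto
  thus False using assms by linarith
qed

lemma dvd_bound:
  fixes x y c :: int
  assumes "x * y = c" "c \<noteq> 0"
  shows "x \<le> \<bar>c\<bar>"
proof -
  have "x dvd c" using assms(1) by (metis dvd_triv_left)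
  hence "\<bar>x\<bar> \<le> \<bar>c\<bar>" using assms(2) by (simp add: dvd_imp_le_int)
  thus ?thesis by simp
qed

lemma k_one:
  fixes k y c :: int
  assumes "k * y = c" "k > 0" "odd k" "c = 1 \<or> c = 2 \<or> c = 4"
  shows "k = 1"
proof -
  have "k dvd c" using assms(1) by (metis dvd_triv_left)
  hence "k \<le> c" using assms(4) by (intro zdvd_imp_le) auto
  hence "k \<le> 4" using assms(4) by auto
  hence "k = 1 \<or> k = 3" using assms(2,3) by presburger
  moreover have "k \<noteq> 3" using \<open>k dvd c\<close> assms(4) by auto
  ultimately show ?thesis by blast
qed

lemma case2:
  fixes \<mu> n :: int
  assumes "\<mu> > 0" "n > 0" "(\<mu>^2 - 4) * (n^2 - 16) = 65"
  shows False
proof -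
  have "\<mu>^2 - 4 \<le> 65" using dvd_bound[OF assms(3)] by simp
  hence "\<mu> \<le> 8" using sq_bound[of "\<mu>" 69 8] assms by simp
  have "n^2 - 16 \<le> 65" using dvd_bound[of "n^2-16" "\<mu>^2-4"] assms(3) by (simp add: mult.commute)
  hence "n \<le> 9" using sq_bound[of "n" 81 9] assms by simp
  have m: "\<mu> = 1 \<or> \<mu> = 2 \<or> \<mu> = 3 \<or> \<mu> = 4 \<or> \<mu> = 5 \<or> \<mu> = 6 \<or> \<mu> = 7 \<or> \<mu> = 8"
    using \<open>\<mu> \<le> 8\<close> assms(1) by presburger
  have nn: "n = 1 \<or> n = 2 \<or> n = 3 \<or> n = 4 \<or> n = 5 \<or> n = 6 \<or> n = 7 \<or> n = 8 \<or> n = 9"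
    using \<open>n \<le> 9\<close> assms(2) by presburger
  from m nn assms(3) show False by (elim disjE) simp_all
qed

lemma case4:
  fixes \<mu> n :: int
  assumes "\<mu> > 0" "n > 0" "(\<mu>^2 - 2) * (n^2 - 8) = 18"
  shows False
proof -
  have "\<mu>^2 - 2 \<le> 18" using dvd_bound[OF assms(3)] by simp
  hence "\<mu> \<le> 4" using sq_bound[of "\<mu>" 20 4] assms by simp
  have "n^2 - 8 \<le> 18" using dvd_bound[of "n^2-8" "\<mu>^2-2"] assms(3) by (simp add: mult.commute)
  hence "n \<le> 5" using sq_bound[of "n" 26 5] assms by simp
  have m: "\<mu> = 1 \<or> \<mu> = 2 \<or> \<mu> = 3 \<or> \<mu> = 4"
    using \<open>\<mu> \<le> 4\<close> assms(1) by presburger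
  have nn: "n = 1 \<or> n = 2 \<or> n = 3 \<or> n = 4 \<or> n = 5"
    using \<open>n \<le> 5\<close> assms(2) by presburger
  from m nn assms(3) show False by (elim disjE) simp_all
qed

lemma case8:
  fixes \<mu> n :: int
  assumes "\<mu> > 0" "n > 0" "(\<mu>^2 - 1) * (n^2 - 4) = 8"
  shows False
proof -
  have "\<mu>^2 - 1 \<le> 8" using dvd_bound[OF assms(3)] by simp
  hence "\<mu> \<le> 3" using sq_bound[of "\<mu>" 9 3] assms by simp
  have "n^2 - 4 \<le> 8" using dvd_bound[of "n^2-4" "\<mu>^2-1"] assms(3) by (simp add: mult.commute)
  hence "n \<le> 3" using sq_bound[of "n" 12 3] assms by simp
  have m: "\<mu> = 1 \<or> \<mu> = 2 \<or> \<mu> = 3"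
    using \<open>\<mu> \<le> 3\<close> assms(1) by presburger
  have nn: "n = 1 \<or> n = 2 \<or> n = 3"
    using \<open>n \<le> 3\<close> assms(2) by presburger
  from m nn assms(3) show False by (elim disjE) simp_all
qed

lemma case6:
  fixes k \<mu> n :: int
  assumes "k > 0" "odd k" "\<mu> > 0" "n > 0" "k * (3*k*\<mu>^2*n^2 - 16*\<mu>^2 - 4*n^2) = 9"
  shows False
proof -
  have "k dvd 9" using assms(5) by (metis dvd_triv_left)
  hence "k \<le> 9" by (intro zdvd_imp_le) auto
  have "(3*k*\<mu>^2 - 4) * (3*k*n^2 - 16) = 3 * (k * (3*k*\<mu>^2*n^2 - 16*\<mu>^2 - 4*n^2)) + 64" by algebra
  hence e: "(3*k*\<mu>^2 - 4) * (3*k*n^2 - 16) = 91" using assms(5) by simp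
  have "3*k*\<mu>^2 - 4 \<le> 91" using dvd_bound[OF e] by simp
  moreover have "k*\<mu>^2 - \<mu>^2 = (k-1)*\<mu>^2" by algebra
  moreover have "(k-1)*\<mu>^2 \<ge> 0" using assms(1) by simp
  ultimately have "\<mu>^2 \<le> k*\<mu>^2" by linarith
  with \<open>3*k*\<mu>^2 - 4 \<le> 91\<close> have "\<mu>^2 \<le> 31" by linarith
  hence "\<mu> \<le> 5" using sq_bound[of "\<mu>" 31 5] assms by simp
  have e': "(3*k*n^2 - 16) * (3*k*\<mu>^2 - 4) = 91" using e by (metis mult.commute)
  have "3*k*n^2 - 16 \<le> 91" using dvd_bound[OF e'] by simp
  moreover have "k*n^2 - n^2 = (k-1)*n^2" by algebra
  moreover have "(k-1)*n^2 \<ge> 0" using assms(1) by simp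
  ultimately have "n^2 \<le> k*n^2" by linarith
  with \<open>3*k*n^2 - 16 \<le> 91\<close> have "n^2 \<le> 35" by linarith
  hence "n \<le> 5" using sq_bound[of "n" 35 5] assms by simp
  have kk: "k = 1 \<or> k = 3 \<or> k = 5 \<or> k = 7 \<or> k = 9" using \<open>k \<le> 9\<close> assms(1,2) by presburger
  have m: "\<mu> = 1 \<or> \<mu> = 2 \<or> \<mu> = 3 \<or> \<mu> = 4 \<or> \<mu> = 5"
    using \<open>\<mu> \<le> 5\<close> assms(3) by presburger
  have nn: "n = 1 \<or> n = 2 \<or> n = 3 \<or> n = 4 \<or> n = 5"
    using \<open>n \<le> 5\<close> assms(4) by presburger
  from kk m nn e show False by (elim disjE) simp_all
qed

theorem lemma7:
  fixes k \<mu> n s :: int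
  assumes "k > 0" and "odd k" and "\<mu> > 0" and "n > 0"
    and "k^4 * \<mu>^4 * n^4 - 16 * k * (4 * \<mu>^2 + n^2) = s^2"
  shows "(5 * k * \<mu>^2 - 4) * (5 * k * n^2 - 16) \<le> 189"
proof -
  define P where "P = k^2 * \<mu>^2 * n^2"
  define E where "E = 16 * k * (4 * \<mu>^2 + n^2)"
  define t where "t = \<bar>s\<bar>"
  have P4: "k^4 * \<mu>^4 * n^4 = P^2" unfolding P_def by algebra
  have Epos: "E > 0" unfolding E_def using assms(1,3,4) by (simp add: add_pos_pos)
  have Ppos: "P > 0" unfolding P_def using assms(1,3,4) by simp
  have eq: "P^2 - E = t^2" using assms(5) P4 unfolding E_def t_def by simp
  have t0: "t \<ge> 0" unfolding t_def by simp
  have "t^2 < P^2" using eq Epos by linarith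
  hence "t < P" using Ppos by (simp add: power_less_imp_less_base)
  define d where "d = P - t"
  have d1: "d \<ge> 1" "d \<le> P" using \<open>t < P\<close> t0 unfolding d_def by auto
  have key: "d * (2*P - d) = E"
  proof -
    have "d * (2*P - d) = P^2 - t^2" unfolding d_def by algebra
    thus ?thesis using eq by simp
  qed
  have G: "(5 * k * \<mu>^2 - 4) * (5 * k * n^2 - 16) = 25*P - 80*k*\<mu>^2 - 20*k*n^2 + 64"
    unfolding P_def by algebra
  show ?thesis
  proof (cases "d \<ge> 10")
    case True
    have "(d - 10) * (2*P - d - 10) \<ge> 0" using True d1 by simp
    moreover have "(d - 10) * (2*P - d - 10) = d * (2*P - d) - 10 * (2*P - 10)" by algebra
    moreover have "10 * (2*P - 10) = 20*P - 100" by simp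
    ultimately have "E \<ge> 20*P - 100" using key by linarith
    thus ?thesis using G unfolding E_def by (simp add: algebra_simps)
  next
    case False
    have "even E" unfolding E_def by simp
    hence "even d"
    proof -
      { assume "odd d"
        hence "odd (2*P - d)" by simp
        hence "odd (d * (2*P - d))" using \<open>odd d\<close> by simp
        hence False using key \<open>even E\<close> by simp }
      thus ?thesis by blast
    qed
    hence dd: "d = 2 \<or> d = 4 \<or> d = 6 \<or> d = 8" using False d1 by presburger
    have Pk: "P = k*k*\<mu>^2*n^2" unfolding P_def by (simp add: power2_eq_square)
    show ?thesis using dd
    proof (elim disjE)
      assume "d = 2"
      hence "2 * (2*P - 2) = 16 * k * (4 * \<mu>^2 + n^2)" using key unfolding E_def by simp
      hence "k * (k*\<mu>^2*n^2 - 16*\<mu>^2 - 4*n^2) = 1" using Pk by algebra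
      moreover from this have "k = 1" using k_one assms(1,2) by blast
      ultimately have "\<mu>^2*n^2 - 16*\<mu>^2 - 4*n^2 = 1" by simp
      moreover have "(\<mu>^2 - 4) * (n^2 - 16) = (\<mu>^2*n^2 - 16*\<mu>^2 - 4*n^2) + 64" by algebra
      ultimately have "(\<mu>^2 - 4) * (n^2 - 16) = 65" by simp
      thus ?thesis using case2 assms(3,4) by blast
    next
      assume "d = 4"
      hence "4 * (2*P - 4) = 16 * k * (4 * \<mu>^2 + n^2)" using key unfolding E_def by simp
      hence "k * (k*\<mu>^2*n^2 - 8*\<mu>^2 - 2*n^2) = 2" using Pk by algebra
      moreover from this have "k = 1" using k_one assms(1,2) by blast
      ultimately have "\<mu>^2*n^2 - 8*\<mu>^2 - 2*n^2 = 2" by simp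
      moreover have "(\<mu>^2 - 2) * (n^2 - 8) = (\<mu>^2*n^2 - 8*\<mu>^2 - 2*n^2) + 16" by algebra
      ultimately have "(\<mu>^2 - 2) * (n^2 - 8) = 18" by simp
      thus ?thesis using case4 assms(3,4) by blast
    next
      assume "d = 6"
      hence "6 * (2*P - 6) = 16 * k * (4 * \<mu>^2 + n^2)" using key unfolding E_def by simp
      hence "k * (3*k*\<mu>^2*n^2 - 16*\<mu>^2 - 4*n^2) = 9" using Pk by algebra
      thus ?thesis using case6 assms(1-4) by blast
    next
      assume "d = 8"
      hence "8 * (2*P - 8) = 16 * k * (4 * \<mu>^2 + n^2)" using key unfolding E_def by simp
      hence "k * (k*\<mu>^2*n^2 - 4*\<mu>^2 - n^2) = 4" using Pk by algebra
      moreover from this have "k = 1" using k_one assms(1,2) by blast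
      ultimately have "\<mu>^2*n^2 - 4*\<mu>^2 - n^2 = 4" by simp
      moreover have "(\<mu>^2 - 1) * (n^2 - 4) = (\<mu>^2*n^2 - 4*\<mu>^2 - n^2) + 4" by algebra
      ultimately have "(\<mu>^2 - 1) * (n^2 - 4) = 8" by simp
      thus ?thesis using case8 assms(3,4) by blast
    qed
  qed
qed

end
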